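(* Let $(N_n)_{n\in\mathbb{N}}$ be a strictly increasing sequence of natural numbers and let $f_n:\ell_1\to\mathbb{R}$ be defined as below. Then the sequence $(f_n)_{n \in \mathbb{N}}$ does not converge in norm to zero; in fact $\|f_n\|_{FBL[c_0]} = 1$ for every $n \in \mathbb{N}$.
   Context: Identify $c_0^*=\ell_1$ and write $x^*=(x^*_1,x^*_2,\ldots)$. For $n<m$ let $g_{nm}: \ell_1 \to [0,1]$ be any continuous function such that $g_{nm}(x^* ) = 0$ if $N_m|x_n^*| \leq |x_m^*|$, $g_{nm}(x^* ) = 1$ if $|x_m^*| \leq (N_m-1)|x_n^*|$, and $g_{nm}(x^* )=g_{nm}(x^*/\|x^*\|)$ whenever $x^* \neq 0$. Define $$f_n(x^* ) = \big(|x_n^*|-N_n\max\{|x_m^*| : m<n\}\big)^+ \cdot \prod_{m > n}g_{nm}(x^* ),$$ where $r^+=\max\{r,0\}$ and the max over the empty set is $0$. For $f:\ell_1\to\mathbb{R}$, $\|f\|_{FBL[c_0]} = \sup \{\sum_{i = 1}^k |f(x_{i}^{*})| : k \in \mathbb{N},\ x_1^{*}, \ldots, x_k^{*} \in \ell_1,\ \sup_{x \in B_{c_0}} \sum_{i=1}^k |x_i^{*}(x)| \leq 1 \}$, the norm of the free Banach lattice $FBL[c_0]$. *)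

theory Defs
  imports "HOL-Analysis.Analysis"
begin

text \<open>Elements of l_1 = c_0^* are real sequences indexed by nat (index 0 plays the role of
  the paper's index 1) that are absolutely summable.\<close>

definition is_l1 :: "(nat \<Rightarrow> real) \<Rightarrow> bool" where
  "is_l1 x \<longleftrightarrow> summable (\<lambda>i. \<bar>x i\<bar>)"

definition l1norm :: "(nat \<Rightarrow> real) \<Rightarrow> real" where
  "l1norm x = (\<Sum>i. \<bar>x i\<bar>)"

definition c0_ball :: "(nat \<Rightarrow> real) set" where
  "c0_ball = {x. x \<longlonglongrightarrow> 0 \<and> (\<forall>i. \<bar>x i\<bar> \<le> 1)}"

definition pair :: "(nat \<Rightarrow> real) \<Rightarrow> (nat \<Rightarrow> real) \<Rightarrow> real" where
  "pair xs x = (\<Sum>j. xs j * x j)"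

definition l1_continuous_on :: "(nat \<Rightarrow> real) set \<Rightarrow> ((nat \<Rightarrow> real) \<Rightarrow> real) \<Rightarrow> bool" where
  "l1_continuous_on S g \<longleftrightarrow>
     (\<forall>x\<in>S. \<forall>e>0. \<exists>d>0. \<forall>y\<in>S. l1norm (\<lambda>i. y i - x i) < d \<longrightarrow> \<bar>g y - g x\<bar> < e)"

definition fbl_norm :: "((nat \<Rightarrow> real) \<Rightarrow> real) \<Rightarrow> ereal" where
  "fbl_norm f = (SUP xs \<in> {xs :: (nat \<Rightarrow> real) list. xs \<noteq> [] \<and> (\<forall>v\<in>set xs. is_l1 v) \<and>
        (\<forall>x\<in>c0_ball. (\<Sum>v\<leftarrow>xs. \<bar>pair v x\<bar>) \<le> 1)}.
      ereal (\<Sum>v\<leftarrow>xs. \<bar>f v\<bar>))"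

definition admissible_g :: "(nat \<Rightarrow> nat) \<Rightarrow> (nat \<Rightarrow> nat \<Rightarrow> (nat \<Rightarrow> real) \<Rightarrow> real) \<Rightarrow> bool" where
  "admissible_g N g \<longleftrightarrow> (\<forall>n m. n < m \<longrightarrow>
     (\<forall>x. is_l1 x \<longrightarrow> g n m x \<in> {0..1}) \<and>
     l1_continuous_on {x. is_l1 x \<and> (x n \<noteq> 0 \<or> x m \<noteq> 0)} (g n m) \<and>
     (\<forall>x. is_l1 x \<and> (x n \<noteq> 0 \<or> x m \<noteq> 0) \<and> real (N m) * \<bar>x n\<bar> \<le> \<bar>x m\<bar> \<longrightarrow> g n m x = 0) \<and>
     (\<forall>x. is_l1 x \<and> (x n \<noteq> 0 \<or> x m \<noteq> 0) \<and> \<bar>x m\<bar> \<le> (real (N m) - 1) * \<bar>x n\<bar> \<longrightarrow> g n m x = 1) \<and>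
     (\<forall>x. is_l1 x \<and> x \<noteq> (\<lambda>_. 0) \<longrightarrow> g n m x = g n m (\<lambda>i. x i / l1norm x)))"

definition fseq :: "(nat \<Rightarrow> nat) \<Rightarrow> (nat \<Rightarrow> nat \<Rightarrow> (nat \<Rightarrow> real) \<Rightarrow> real) \<Rightarrow> nat \<Rightarrow> (nat \<Rightarrow> real) \<Rightarrow> real" where
  "fseq N g n x =
     max (\<bar>x n\<bar> - real (N n) * (if n = 0 then 0 else Max ((\<lambda>m. \<bar>x m\<bar>) ` {..<n}))) 0
     * prodinf (\<lambda>k. g n (n + 1 + k) x)"

end

theory Submission
  imports Defs
begin

definition unitv :: "nat \<Rightarrow> nat \<Rightarrow> real" where
  "unitv n = (\<lambda>i. if i = n then 1 else 0)"

lemma pair_unitv: "pair v (unitv n) = v n"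
proof -
  have "(\<lambda>j. v j * unitv n j) = (\<lambda>j. if j = n then v j else 0)"
    by (auto simp: unitv_def)
  then show ?thesis unfolding pair_def using sums_single[of n v] sums_unique by metis
qed

lemma pair_unitv2: "pair (unitv n) x = x n"
proof -
  have "(\<lambda>j. unitv n j * x j) = (\<lambda>j. if j = n then x j else 0)"
    by (auto simp: unitv_def)
  then show ?thesis unfolding pair_def using sums_single[of n x] sums_unique by metis
qed

lemma unitv_l1: "is_l1 (unitv n)"
proof -
  have "(\<lambda>i. \<bar>unitv n i\<bar>) = (\<lambda>i. if i = n then 1 else 0)" by (auto simp: unitv_def)
  then show ?thesis unfolding is_l1_def using summable_single[of n "\<lambda>_. 1::real"] by simp
qed

lemma unitv_ball: "unitv n \<in> c0_ball"
proof -
  have "eventually (\<lambda>i. unitv n i = 0) sequentially"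
    by (rule eventually_sequentiallyI[of "Suc n"]) (auto simp: unitv_def)
  then have "unitv n \<longlonglongrightarrow> 0" by (simp add: tendsto_eventually)
  then show ?thesis unfolding c0_ball_def by (auto simp: unitv_def)
qed

lemma prod_bound:
  assumes N: "strict_mono N" and G: "admissible_g N g" and v: "is_l1 v" and vn: "v n \<noteq> 0"
  shows "0 \<le> prodinf (\<lambda>k. g n (n + 1 + k) v) \<and> prodinf (\<lambda>k. g n (n + 1 + k) v) \<le> 1"
proof -
  have "(\<lambda>i. \<bar>v i\<bar>) \<longlonglongrightarrow> 0" using v unfolding is_l1_def by (rule summable_LIMSEQ_zero)
  moreover have "\<bar>v n\<bar> > 0" using vn by simp
  ultimately have "eventually (\<lambda>i. \<bar>v i\<bar> < \<bar>v n\<bar>) sequentially"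
    by (rule order_tendstoD(2)[where a = "\<bar>v n\<bar>", unfolded dist_real_def, simplified])
  then obtain M where M: "\<And>i. i \<ge> M \<Longrightarrow> \<bar>v i\<bar> < \<bar>v n\<bar>"
    by (auto simp: eventually_sequentially)
  have N2: "real (N m) \<ge> 2" if "m \<ge> 2" for m
  proof -
    have "N 0 < N 1" "N 1 < N m" using N that by (auto simp: strict_mono_def)
    then show ?thesis by simp
  qed
  have g1: "g n (n + 1 + k) v = 1" if "k \<ge> M + 2" for k
  proof -
    let ?m = "n + 1 + k"
    have "\<bar>v ?m\<bar> < \<bar>v n\<bar>" using M that by simp
    moreover have "real (N ?m) - 1 \<ge> 1" using N2[of ?m] that by simp
    ultimately have "\<bar>v ?m\<bar> \<le> (real (N ?m) - 1) * \<bar>v n\<bar>"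
      using mult_right_mono[of 1 "real (N ?m) - 1" "\<bar>v n\<bar>"] by simp
    then show ?thesis using G v vn unfolding admissible_g_def by auto
  qed
  have "prodinf (\<lambda>k. g n (n + 1 + k) v) = (\<Prod>k\<in>{..<M+2}. g n (n + 1 + k) v)"
  proof (rule prodinf_finite)
    fix k assume "k \<notin> {..<M+2}"
    then show "g n (n + 1 + k) v = 1" using g1[of k] by simp
  qed simp
  moreover have gb: "0 \<le> g n (n + 1 + k) v \<and> g n (n + 1 + k) v \<le> 1" for k
    using G v unfolding admissible_g_def by auto
  moreover have "0 \<le> (\<Prod>k\<in>{..<M+2}. g n (n + 1 + k) v)"
    by (rule prod_nonneg) (use gb in blast)
  moreover have "(\<Prod>k\<in>{..<M+2}. g n (n + 1 + k) v) \<le> 1"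
    by (rule prod_le_1) (use gb in blast)
  ultimately show ?thesis by metis
qed

lemma fseq_bound:
  assumes N: "strict_mono N" and G: "admissible_g N g" and v: "is_l1 v"
  shows "\<bar>fseq N g n v\<bar> \<le> \<bar>v n\<bar>"
proof -
  define A where "A = real (N n) * (if n = 0 then 0 else Max ((\<lambda>m. \<bar>v m\<bar>) ` {..<n}))"
  have A0: "A \<ge> 0"
  proof (cases "n = 0")
    case False
    have "\<bar>v 0\<bar> \<le> Max ((\<lambda>m. \<bar>v m\<bar>) ` {..<n})" using False by (intro Max_ge) auto
    then have "0 \<le> Max ((\<lambda>m. \<bar>v m\<bar>) ` {..<n})" by linarith
    then show ?thesis unfolding A_def by simp
  qed (simp add: A_def)
  have f: "fseq N g n v = max (\<bar>v n\<bar> - A) 0 * prodinf (\<lambda>k. g n (n + 1 + k) v)"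
    unfolding fseq_def A_def by simp
  show ?thesis
  proof (cases "v n = 0")
    case True
    then show ?thesis using f A0 by simp
  next
    case False
    from prod_bound[OF N G v False] have "0 \<le> prodinf (\<lambda>k. g n (n + 1 + k) v)"
      "prodinf (\<lambda>k. g n (n + 1 + k) v) \<le> 1" by auto
    moreover have "0 \<le> max (\<bar>v n\<bar> - A) 0" "max (\<bar>v n\<bar> - A) 0 \<le> \<bar>v n\<bar>" using A0 by auto
    ultimately have "0 \<le> max (\<bar>v n\<bar> - A) 0 * prodinf (\<lambda>k. g n (n + 1 + k) v)"
      "max (\<bar>v n\<bar> - A) 0 * prodinf (\<lambda>k. g n (n + 1 + k) v) \<le> \<bar>v n\<bar>"
      using mult_mono[of "max (\<bar>v n\<bar> - A) 0" "\<bar>v n\<bar>" "prodinf (\<lambda>k. g n (n + 1 + k) v)" 1]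
      by auto
    then show ?thesis unfolding f by simp
  qed
qed

lemma fseq_unitv:
  assumes N: "strict_mono N" and G: "admissible_g N g"
  shows "fseq N g n (unitv n) = 1"
proof -
  have g1: "g n (n + 1 + k) (unitv n) = 1" for k
  proof -
    have "N 0 < N (n + 1 + k)" using N by (auto simp: strict_mono_def)
    then have "real (N (n + 1 + k)) - 1 \<ge> 0" by simp
    then show ?thesis using G unitv_l1[of n] unfolding admissible_g_def
      by (auto simp: unitv_def)
  qed
  have "prodinf (\<lambda>k. g n (n + 1 + k) (unitv n)) = 1"
    using prodinf_finite[of "{}" "\<lambda>k. g n (n + 1 + k) (unitv n)"] g1 by simp
  moreover have "(if n = 0 then 0 else Max ((\<lambda>m. \<bar>unitv n m\<bar>) ` {..<n})) = 0"
  proof (cases "n = 0")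
    case False
    then have "(\<lambda>m. \<bar>unitv n m\<bar>) ` {..<n} = {0}" by (auto simp: unitv_def)
    then show ?thesis by simp
  qed simp
  ultimately show ?thesis unfolding fseq_def by (simp add: unitv_def)
qed

lemma norm_one:
  assumes N: "strict_mono N" and G: "admissible_g N g"
  shows "fbl_norm (fseq N g n) = 1"
  unfolding fbl_norm_def
proof (rule antisym)
  show "(SUP xs \<in> {xs :: (nat \<Rightarrow> real) list. xs \<noteq> [] \<and> (\<forall>v\<in>set xs. is_l1 v) \<and>
        (\<forall>x\<in>c0_ball. (\<Sum>v\<leftarrow>xs. \<bar>pair v x\<bar>) \<le> 1)}.
      ereal (\<Sum>v\<leftarrow>xs. \<bar>fseq N g n v\<bar>)) \<le> 1"
  proof (rule SUP_least)
    fix xs :: "(nat \<Rightarrow> real) list"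
    assume "xs \<in> {xs :: (nat \<Rightarrow> real) list. xs \<noteq> [] \<and> (\<forall>v\<in>set xs. is_l1 v) \<and>
        (\<forall>x\<in>c0_ball. (\<Sum>v\<leftarrow>xs. \<bar>pair v x\<bar>) \<le> 1)}"
    then have l1: "\<And>v. v \<in> set xs \<Longrightarrow> is_l1 v" and b: "(\<Sum>v\<leftarrow>xs. \<bar>pair v (unitv n)\<bar>) \<le> 1"
      using unitv_ball[of n] by auto
    have "(\<Sum>v\<leftarrow>xs. \<bar>fseq N g n v\<bar>) \<le> (\<Sum>v\<leftarrow>xs. \<bar>pair v (unitv n)\<bar>)"
      by (rule sum_list_mono) (simp add: pair_unitv fseq_bound[OF N G l1])
    with b show "ereal (\<Sum>v\<leftarrow>xs. \<bar>fseq N g n v\<bar>) \<le> 1" by simp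
  qed
next
  have x: "[unitv n] \<in> {xs :: (nat \<Rightarrow> real) list. xs \<noteq> [] \<and> (\<forall>v\<in>set xs. is_l1 v) \<and>
        (\<forall>x\<in>c0_ball. (\<Sum>v\<leftarrow>xs. \<bar>pair v x\<bar>) \<le> 1)}"
    using unitv_l1[of n] by (auto simp: pair_unitv2 c0_ball_def)
  have "ereal (\<Sum>v\<leftarrow>[unitv n]. \<bar>fseq N g n v\<bar>) = 1" using fseq_unitv[OF N G] by simp
  then show "1 \<le> (SUP xs \<in> {xs :: (nat \<Rightarrow> real) list. xs \<noteq> [] \<and> (\<forall>v\<in>set xs. is_l1 v) \<and>
        (\<forall>x\<in>c0_ball. (\<Sum>v\<leftarrow>xs. \<bar>pair v x\<bar>) \<le> 1)}.
      ereal (\<Sum>v\<leftarrow>xs. \<bar>fseq N g n v\<bar>))"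
    using SUP_upper[OF x, of "\<lambda>xs. ereal (\<Sum>v\<leftarrow>xs. \<bar>fseq N g n v\<bar>)"] by metis
qed

theorem mainTheorem10:
  fixes N :: "nat \<Rightarrow> nat"
    and g :: "nat \<Rightarrow> nat \<Rightarrow> (nat \<Rightarrow> real) \<Rightarrow> real"
  assumes "strict_mono N"
    and "admissible_g N g"
  shows "\<not> ((\<lambda>n. fbl_norm (fseq N g n)) \<longlonglongrightarrow> 0) \<and> (\<forall>n. fbl_norm (fseq N g n) = 1)"
proof -
  have e: "\<forall>n. fbl_norm (fseq N g n) = 1" using norm_one[OF assms] by blast
  have "\<not> ((\<lambda>n. 1::ereal) \<longlonglongrightarrow> 0)"
    using LIMSEQ_const_iff[of "1::ereal" 0] by simp
  with e show ?thesis by simp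
qed

end
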